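(* Let $\hat\xi_1,\dots,\hat\xi_T\in\mathbb{R}^n$, $\kappa>0$, and let $\mathcal{U}\subseteq\mathcal{P}$ be nonempty, closed and convex, with $\hat\Sigma(p)$ positive definite for every $p\in\mathcal{U}$. For $p\in\mathcal{U}$ let $y^{\mathrm{RP}}(p)$ be the unique minimizer of $y\mapsto f_{\mathrm{RP}}(y,p)$ over $\mathbb{R}^n_{++}$ and set $\phi(p)=f_{\mathrm{RP}}(y^{\mathrm{RP}}(p),p)$. Let $(y^*,p^* )\in\mathbb{R}^n_{++}\times\mathcal{U}$ be a saddle point of $f_{\mathrm{RP}}$ on $\mathbb{R}^n_{++}\times\mathcal{U}$. Fix $\gamma>0$ and $p^0\in\mathcal{U}$, and define for $j\ge0$ $$y^j=y^{\mathrm{RP}}(p^j),\qquad p^{j+1}=\Pi_{\mathcal{U}}\big(p^j+\gamma\,\nabla_p f_{\mathrm{RP}}(y^j,p^j)\big),$$ where $\nabla_p f_{\mathrm{RP}}(y,p)=\tfrac12\hat\pi^2(y)-\hat\Theta(y)p$ and $\Pi_{\mathcal{U}}$ is the Euclidean projection onto $\mathcal{U}$. Suppose $L\ge0$ satisfies $\|\nabla_p f_{\mathrm{RP}}(y^j,p^j)\|_2\le L$ for all $j\ge0$. Then for every $k\ge1$, $$0\le \phi(p^* )-\frac1k\sum_{j=0}^{k-1}\phi(p^j)\le\frac{\|p^0-p^*\|_2^2}{2k\gamma}+\frac{\gamma L^2}{2}.$$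
   Context: $\mathcal{P}=\{p\in\mathbb{R}^T:p\ge0,\mathbf{1}^\top p=1\}$; $\mathbb{R}^n_{++}$ is the open positive orthant. $\hat\mu(p)=\sum_t p_t\hat\xi_t$, $\hat\Sigma(p)=\sum_t p_t(\hat\xi_t-\hat\mu(p))(\hat\xi_t-\hat\mu(p))^\top$. $\hat\pi(y)\in\mathbb{R}^T$ has entries $\hat\xi_t^\top y$, $\hat\pi^2(y)$ its entrywise square, $\hat\Theta(y)=\hat\pi(y)\hat\pi(y)^\top$, and $f_{\mathrm{RP}}(y,p)=\tfrac12\big(p^\top\hat\pi^2(y)-p^\top\hat\Theta(y)p\big)-\kappa\sum_{i=1}^n\ln y_i$. A saddle point $(y^*,p^* )$ means $f_{\mathrm{RP}}(y^*,p)\le f_{\mathrm{RP}}(y^*,p^* )\le f_{\mathrm{RP}}(y,p^* )$ for all $y\in\mathbb{R}^n_{++}$, $p\in\mathcal{U}$. (The paper phrases the bound on the gradient as a Lipschitz constant $L$ of $\nabla_p f_{\mathrm{RP}}$, used as a bound on the gradient norm along the iterates.) *)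

theory Defs
  imports "HOL-Analysis.Analysis"
begin

text \<open>Scenarios are indexed by a finite type 't (T = CARD('t)), assets by a finite
  type 'n (n = CARD('n)). The data are xi :: 't => real^'n.\<close>

definition prob_simplex :: "(real^'t::finite) set" where
  "prob_simplex = {p. (\<forall>t. 0 \<le> p $ t) \<and> (\<Sum>t\<in>UNIV. p $ t) = 1}"

definition pos_orthant :: "(real^'n::finite) set" where
  "pos_orthant = {y. \<forall>i. 0 < y $ i}"

definition mu_hat :: "('t::finite \<Rightarrow> real^'n::finite) \<Rightarrow> real^'t \<Rightarrow> real^'n" where
  "mu_hat xi p = (\<Sum>t\<in>UNIV. (p $ t) *\<^sub>R xi t)"

definition outer_prod :: "real^'n::finite \<Rightarrow> real^'n \<Rightarrow> real^'n^'n" where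
  "outer_prod a b = (\<chi> i j. a $ i * b $ j)"

definition Sigma_hat :: "('t::finite \<Rightarrow> real^'n::finite) \<Rightarrow> real^'t \<Rightarrow> real^'n^'n" where
  "Sigma_hat xi p = (\<Sum>t\<in>UNIV. (p $ t) *\<^sub>R outer_prod (xi t - mu_hat xi p) (xi t - mu_hat xi p))"

definition pos_definite :: "real^'n::finite^'n \<Rightarrow> bool" where
  "pos_definite M \<longleftrightarrow> (\<forall>x. x \<noteq> 0 \<longrightarrow> 0 < x \<bullet> (M *v x))"

definition pi_hat :: "('t::finite \<Rightarrow> real^'n::finite) \<Rightarrow> real^'n \<Rightarrow> real^'t" where
  "pi_hat xi y = (\<chi> t. xi t \<bullet> y)"

definition pi2_hat :: "('t::finite \<Rightarrow> real^'n::finite) \<Rightarrow> real^'n \<Rightarrow> real^'t" where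
  "pi2_hat xi y = (\<chi> t. (pi_hat xi y $ t)^2)"

definition Theta_hat :: "('t::finite \<Rightarrow> real^'n::finite) \<Rightarrow> real^'n \<Rightarrow> real^'t^'t" where
  "Theta_hat xi y = (\<chi> s t. pi_hat xi y $ s * pi_hat xi y $ t)"

definition f_RP :: "('t::finite \<Rightarrow> real^'n::finite) \<Rightarrow> real \<Rightarrow> real^'n \<Rightarrow> real^'t \<Rightarrow> real" where
  "f_RP xi \<kappa> y p = (1/2) * (p \<bullet> pi2_hat xi y - p \<bullet> (Theta_hat xi y *v p))
                      - \<kappa> * (\<Sum>i\<in>UNIV. ln (y $ i))"

definition grad_p_f_RP :: "('t::finite \<Rightarrow> real^'n::finite) \<Rightarrow> real^'n \<Rightarrow> real^'t \<Rightarrow> real^'t" where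
  "grad_p_f_RP xi y p = (1/2) *\<^sub>R pi2_hat xi y - Theta_hat xi y *v p"

definition y_RP :: "('t::finite \<Rightarrow> real^'n::finite) \<Rightarrow> real \<Rightarrow> real^'t \<Rightarrow> real^'n" where
  "y_RP xi \<kappa> p = (THE y. y \<in> pos_orthant \<and> (\<forall>z\<in>pos_orthant. f_RP xi \<kappa> y p \<le> f_RP xi \<kappa> z p))"

definition phi_RP :: "('t::finite \<Rightarrow> real^'n::finite) \<Rightarrow> real \<Rightarrow> real^'t \<Rightarrow> real" where
  "phi_RP xi \<kappa> p = f_RP xi \<kappa> (y_RP xi \<kappa> p) p"

definition saddle_point :: "('t::finite \<Rightarrow> real^'n::finite) \<Rightarrow> real \<Rightarrow> (real^'t) set \<Rightarrow> real^'n \<Rightarrow> real^'t \<Rightarrow> bool" where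
  "saddle_point xi \<kappa> U ys ps \<longleftrightarrow> ys \<in> pos_orthant \<and> ps \<in> U \<and>
     (\<forall>p\<in>U. f_RP xi \<kappa> ys p \<le> f_RP xi \<kappa> ys ps) \<and>
     (\<forall>y\<in>pos_orthant. f_RP xi \<kappa> ys ps \<le> f_RP xi \<kappa> y ps)"

end

theory Submission
  imports Defs
begin



lemma Theta_mult: "Theta_hat xi y *v p = (p \<bullet> pi_hat xi y) *\<^sub>R pi_hat xi y"
  by (simp add: Theta_hat_def vec_eq_iff matrix_vector_mult_def inner_vec_def
      sum_distrib_left sum_distrib_right mult.commute mult.left_commute)

lemma pTheta: "p \<bullet> (Theta_hat xi y *v p) = (p \<bullet> pi_hat xi y)^2"
  by (simp add: Theta_mult power2_eq_square)

lemma f_concave: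
  "f_RP xi \<kappa> y q \<le> f_RP xi \<kappa> y p + grad_p_f_RP xi y p \<bullet> (q - p)"
proof -
  define a where "a = q \<bullet> pi_hat xi y"
  define b where "b = p \<bullet> pi_hat xi y"
  have g: "grad_p_f_RP xi y p \<bullet> (q - p) = (1/2) * (q \<bullet> pi2_hat xi y - p \<bullet> pi2_hat xi y) - b * (a - b)"
    by (simp add: grad_p_f_RP_def Theta_mult inner_diff_left inner_diff_right a_def b_def inner_commute algebra_simps)
  have "f_RP xi \<kappa> y q = f_RP xi \<kappa> y p + grad_p_f_RP xi y p \<bullet> (q - p) - (1/2) * (a - b)^2"
    unfolding g f_RP_def pTheta a_def[symmetric] b_def[symmetric]
    by (simp add: algebra_simps power2_eq_square)
  then show ?thesis by simp
qed

definition Qf :: "('t::finite \<Rightarrow> real^'n::finite) \<Rightarrow> real^'t \<Rightarrow> real^'n \<Rightarrow> real" where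
  "Qf xi p y = (\<Sum>t\<in>UNIV. p $ t * ((xi t - mu_hat xi p) \<bullet> y)^2)"

lemma Qf_eq:
  assumes "(\<Sum>t\<in>UNIV. p $ t) = 1"
  shows "p \<bullet> pi2_hat xi y - (p \<bullet> pi_hat xi y)^2 = Qf xi p y"
proof -
  define m where "m = p \<bullet> pi_hat xi y"
  have mu: "mu_hat xi p \<bullet> y = m"
    unfolding mu_hat_def m_def inner_sum_left inner_vec_def pi_hat_def
    by (simp add: sum_distrib_left sum_distrib_right mult.assoc mult.left_commute; rule sum.swap)
  have "Qf xi p y = (\<Sum>t\<in>UNIV. p $ t * (xi t \<bullet> y)^2) - 2 * m * (\<Sum>t\<in>UNIV. p $ t * (xi t \<bullet> y)) + m^2 * (\<Sum>t\<in>UNIV. p $ t)"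
    by (simp add: Qf_def inner_diff_left mu power2_eq_square algebra_simps sum_subtractf sum.distrib sum_distrib_left sum_distrib_right)
  also have "(\<Sum>t\<in>UNIV. p $ t * (xi t \<bullet> y)) = m"
    by (simp add: m_def inner_vec_def pi_hat_def)
  also have "(\<Sum>t\<in>UNIV. p $ t * (xi t \<bullet> y)^2) = p \<bullet> pi2_hat xi y"
    by (simp add: inner_vec_def pi2_hat_def pi_hat_def)
  finally show ?thesis using assms by (simp add: m_def power2_eq_square)
qed

lemma Sigma_quad: "x \<bullet> (Sigma_hat xi p *v x) = Qf xi p x"
proof -
  define d where "d t = xi t - mu_hat xi p" for t
  have "x \<bullet> (Sigma_hat xi p *v x) = (\<Sum>i\<in>UNIV. x $ i * (\<Sum>j\<in>UNIV. (\<Sum>t\<in>UNIV. p $ t * (d t $ i * d t $ j)) * x $ j))"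
    by (simp add: Sigma_hat_def d_def[symmetric] inner_vec_def matrix_vector_mult_def sum_component outer_prod_def)
  also have "\<dots> = (\<Sum>i\<in>UNIV. \<Sum>j\<in>UNIV. \<Sum>t\<in>UNIV. p $ t * ((d t $ i * x $ i) * (d t $ j * x $ j)))"
    by (simp add: sum_distrib_left sum_distrib_right mult.assoc mult.left_commute mult.commute)
  also have "\<dots> = (\<Sum>i\<in>UNIV. \<Sum>t\<in>UNIV. \<Sum>j\<in>UNIV. p $ t * ((d t $ i * x $ i) * (d t $ j * x $ j)))"
    by (rule sum.cong[OF refl], rule sum.swap)
  also have "\<dots> = (\<Sum>t\<in>UNIV. \<Sum>i\<in>UNIV. \<Sum>j\<in>UNIV. p $ t * ((d t $ i * x $ i) * (d t $ j * x $ j)))"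
    by (rule sum.swap)
  also have "\<dots> = (\<Sum>t\<in>UNIV. p $ t * ((\<Sum>i\<in>UNIV. d t $ i * x $ i) * (\<Sum>j\<in>UNIV. d t $ j * x $ j)))"
    apply (rule sum.cong[OF refl])
    apply (subst sum_product)
    apply (simp add: sum_distrib_left)
    done
  finally show ?thesis
    by (simp add: Qf_def d_def[symmetric] inner_vec_def power2_eq_square)
qed




definition Qg :: "('t::finite \<Rightarrow> real) \<Rightarrow> ('t \<Rightarrow> real^'n::finite) \<Rightarrow> real^'n \<Rightarrow> real" where
  "Qg c d x = (\<Sum>t\<in>UNIV. c t * (d t \<bullet> x)^2)"

lemma Qg_homog: "Qg c d (r *\<^sub>R x) = r^2 * Qg c d x"
  by (simp add: Qg_def power_mult_distrib sum_distrib_left algebra_simps)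

lemma Qg_zero: "Qg c d 0 = 0"
  by (simp add: Qg_def)

lemma Qg_mid: "Qg c d ((1/2) *\<^sub>R (u + v)) = (Qg c d u + Qg c d v)/2 - Qg c d (u - v) / 4"
  unfolding Qg_def
  apply (simp only: sum.distrib[symmetric] sum_divide_distrib sum_subtractf[symmetric])
  apply (rule sum.cong[OF refl])
  apply (simp add: inner_add_right inner_diff_right power2_eq_square field_simps)
  done

lemma Qg_cont: "continuous_on S (Qg c d)"
  unfolding Qg_def by (intro continuous_intros)

lemma quad_lb:
  assumes pd: "\<forall>x. x \<noteq> 0 \<longrightarrow> 0 < Qg c d (x::real^'n::finite)"
  obtains l where "l > 0" "\<forall>x. l * norm x ^ 2 \<le> Qg c d x"
proof -
  have ne: "sphere (0::real^'n) 1 \<noteq> {}" by simp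
  obtain x0 where x0: "x0 \<in> sphere 0 1" and mn: "\<forall>y\<in>sphere 0 1. Qg c d x0 \<le> Qg c d y"
    using continuous_attains_inf[OF compact_sphere ne Qg_cont] by blast
  have "x0 \<noteq> 0" using x0 by auto
  hence lpos: "Qg c d x0 > 0" using pd by blast
  have "Qg c d x0 * norm x ^ 2 \<le> Qg c d x" for x
  proof (cases "x = 0")
    case True then show ?thesis by (simp add: Qg_zero)
  next
    case False
    define u where "u = (1 / norm x) *\<^sub>R x"
    have u: "u \<in> sphere 0 1" using False by (simp add: u_def)
    have xu: "x = norm x *\<^sub>R u" using False by (simp add: u_def)
    have "Qg c d x = norm x ^ 2 * Qg c d u" by (subst xu, rule Qg_homog)
    moreover have "Qg c d x0 \<le> Qg c d u" using mn u by blast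
    ultimately show ?thesis by (metis mult.commute mult_right_mono zero_le_power2)
  qed
  then show ?thesis using that lpos by blast
qed

lemma ln_mid: assumes "(a::real) > 0" "b > 0" shows "ln a + ln b \<le> 2 * ln ((a + b)/2)"
proof -
  have "a * b \<le> ((a+b)/2)^2"
    using sum_squares_ge_zero[of "a-b" 0] by (simp add: power2_eq_square field_simps)
  hence "ln (a*b) \<le> ln (((a+b)/2)^2)" using assms by simp
  thus ?thesis using assms by (simp add: ln_mult ln_realpow)
qed

lemma h_lb:
  fixes l s \<kappa> :: real
  assumes l: "l > 0" and k: "\<kappa> > 0" and s: "s > 0"
  shows "\<kappa> - \<kappa>^2/(2*l) \<le> l/2 * s^2 - \<kappa> * ln s"
proof -
  have e: "l / 2 * (s - \<kappa> / l) ^ 2 = l / 2 * s ^ 2 - \<kappa> * s + \<kappa> ^ 2 / (2 * l)" using l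
    by (simp add: power2_eq_square field_simps)
  have "0 \<le> l / 2 * (s - \<kappa> / l) ^ 2" using l by simp
  moreover have "\<kappa> * ln s \<le> \<kappa> * (s - 1)" using ln_le_minus_one[OF s] k by (simp add: mult_left_mono)
  ultimately show ?thesis using e by (simp add: algebra_simps)
qed




lemma exists_min:
  fixes c :: "'t::finite \<Rightarrow> real" and d :: "'t \<Rightarrow> real^'n::finite"
  assumes pd: "\<forall>x. x \<noteq> 0 \<longrightarrow> 0 < Qg c d x" and k: "\<kappa> > 0"
  defines "g \<equiv> \<lambda>y::real^'n. (1/2) * Qg c d y - \<kappa> * (\<Sum>i\<in>UNIV. ln (y $ i))"
  shows "\<exists>y. y \<in> pos_orthant \<and> (\<forall>z\<in>pos_orthant. g y \<le> g z)"
proof -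
  obtain l where l: "l > 0" and lb: "\<forall>x. l * norm x ^ 2 \<le> Qg c d x"
    using quad_lb[OF pd] by blast
  define h where "h s = l/2 * s^2 - \<kappa> * ln s" for s :: real
  define m0 where "m0 = \<kappa> - \<kappa>^2/(2*l)"
  have hlb: "m0 \<le> h s" if "s > 0" for s
    unfolding h_def m0_def using h_lb[OF l k that] .
  have glb: "(\<Sum>i\<in>UNIV. h (y $ i)) \<le> g y" for y
  proof -
    have "norm y ^ 2 = (\<Sum>i\<in>UNIV. (y $ i)^2)"
      unfolding power2_norm_eq_inner inner_vec_def by (simp add: power2_eq_square)
    hence "l/2 * (\<Sum>i\<in>UNIV. (y $ i)^2) \<le> (1/2) * Qg c d y" using lb[rule_format, of y] by simp
    thus ?thesis unfolding g_def h_def by (simp add: sum_subtractf sum_distrib_left)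
  qed
  define N where "N = real (CARD('n) - 1)"
  have single: "h (y $ k) + N * m0 \<le> (\<Sum>i\<in>UNIV. h (y $ i))" if "y \<in> pos_orthant" for y :: "real^'n" and k
  proof -
    have "(\<Sum>i\<in>UNIV. h (y $ i)) = h (y $ k) + (\<Sum>i\<in>UNIV - {k}. h (y $ i))"
      by (simp add: sum.remove)
    moreover have "of_nat (card (UNIV - {k})) * m0 \<le> (\<Sum>i\<in>UNIV - {k}. h (y $ i))"
      by (rule sum_bounded_below) (use that hlb in \<open>auto simp: pos_orthant_def\<close>)
    moreover have "card (UNIV - {k}) = CARD('n) - 1" by (simp add: card_Diff_singleton)
    ultimately show ?thesis by (simp add: N_def)
  qed
  define one :: "real^'n" where "one = (\<chi> i. 1)"
  define Mx where "Mx = g one - N * m0"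
  define a where "a = min 1 (exp (- Mx / \<kappa>)) / 2"
  define b where "b = max 1 (2 * (\<kappa> + \<bar>Mx\<bar>) / l) + 1"
  have a0: "0 < a" unfolding a_def by simp
  have a1: "a \<le> 1" unfolding a_def by simp
  have b1: "1 \<le> b" unfolding b_def by simp
  define K where "K = cbox (\<chi> i. a) (\<chi> i. b :: real^'n)"
  have Kmem: "y \<in> K \<longleftrightarrow> (\<forall>i. a \<le> y $ i \<and> y $ i \<le> b)" for y
    by (simp add: K_def mem_box_cart)
  have oneK: "one \<in> K" using a1 b1 by (simp add: Kmem one_def)
  have Kpos: "K \<subseteq> pos_orthant" using a0 by (auto simp: Kmem pos_orthant_def intro: less_le_trans)
  have hbig: "Mx < h s" if "s > 0" "s < a \<or> s > b" for s
  proof (cases "s < a")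
    case True
    have "ln s < ln a" using True that(1) a0 by simp
    have "a \<le> exp (- Mx / \<kappa>)" unfolding a_def
      using min.cobounded2[of 1 "exp (- Mx / \<kappa>)"] exp_gt_zero[of "- Mx / \<kappa>"] by linarith
    hence "ln a \<le> ln (exp (- Mx / \<kappa>))" using a0 by (subst ln_le_cancel_iff) auto
    then have "ln s < ln (exp (- Mx / \<kappa>))" using \<open>ln s < ln a\<close> by linarith
    also have "\<dots> = - Mx / \<kappa>" by simp
    finally have "\<kappa> * ln s < - Mx" using k by (simp add: field_simps)
    moreover have "0 \<le> l/2 * s^2" using l by simp
    ultimately show ?thesis unfolding h_def by linarith
  next
    case False
    hence sb: "s > b" using that by auto
    hence s1: "s \<ge> 1" and s2: "s > 2 * (\<kappa> + \<bar>Mx\<bar>) / l" unfolding b_def by auto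
    have X: "l * s / 2 - \<kappa> > \<bar>Mx\<bar>" using s2 l by (simp add: field_simps)
    have "s * (l * s / 2 - \<kappa>) \<ge> 1 * (l * s / 2 - \<kappa>)"
      by (rule mult_right_mono) (use s1 X in auto)
    moreover have "\<kappa> * ln s \<le> \<kappa> * (s - 1)" using ln_le_minus_one[OF that(1)] k by (simp add: mult_left_mono)
    ultimately have "h s \<ge> (l * s / 2 - \<kappa>) + \<kappa>" unfolding h_def
      by (simp add: power2_eq_square algebra_simps)
    thus ?thesis using X k by linarith
  qed
  have Knz: "x $ i \<noteq> 0" if "x \<in> K" for x i
  proof -
    have "a \<le> x $ i" using that Kmem by blast
    then show ?thesis using a0 by linarith
  qed
  have cont: "continuous_on K g"
    unfolding g_def
    by (intro continuous_intros Qg_cont) (use Knz in blast)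
  have Kne: "K \<noteq> {}" using oneK by auto
  obtain y0 where y0K: "y0 \<in> K" and y0min: "\<forall>z\<in>K. g y0 \<le> g z"
    using continuous_attains_inf[OF _ Kne cont] K_def compact_cbox by blast
  have "\<forall>z\<in>pos_orthant. g y0 \<le> g z"
  proof
    fix z :: "real^'n" assume z: "z \<in> pos_orthant"
    show "g y0 \<le> g z"
    proof (cases "z \<in> K")
      case True then show ?thesis using y0min by blast
    next
      case False
      then obtain i where i: "z $ i < a \<or> z $ i > b" by (auto simp: Kmem not_le)
      have zi: "z $ i > 0" using z by (simp add: pos_orthant_def)
      have "Mx < h (z $ i)" using hbig[OF zi i] .
      hence "g one < g z" using single[OF z, of i] glb[of z] unfolding Mx_def by linarith
      moreover have "g y0 \<le> g one" using y0min oneK by blast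
      ultimately show ?thesis by linarith
    qed
  qed
  then show ?thesis using y0K Kpos by blast
qed

lemma unique_min:
  fixes c :: "'t::finite \<Rightarrow> real" and d :: "'t \<Rightarrow> real^'n::finite"
  assumes pd: "\<forall>x. x \<noteq> 0 \<longrightarrow> 0 < Qg c d x" and k: "\<kappa> > 0"
  defines "g \<equiv> \<lambda>y::real^'n. (1/2) * Qg c d y - \<kappa> * (\<Sum>i\<in>UNIV. ln (y $ i))"
  assumes y1: "y1 \<in> pos_orthant" "\<forall>z\<in>pos_orthant. g y1 \<le> g z"
    and y2: "y2 \<in> pos_orthant" "\<forall>z\<in>pos_orthant. g y2 \<le> g z"
  shows "y1 = y2"
proof (rule ccontr)
  assume ne: "y1 \<noteq> y2"
  define z where "z = (1/2) *\<^sub>R (y1 + y2)"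
  have zpos: "z \<in> pos_orthant" using y1(1) y2(1) by (auto simp: z_def pos_orthant_def intro!: add_pos_pos)
  have eq: "g y1 = g y2" using y1 y2 by force
  have "Qg c d (y1 - y2) > 0" using pd ne by auto
  have lnz: "(\<Sum>i\<in>UNIV. ln (y1 $ i)) + (\<Sum>i\<in>UNIV. ln (y2 $ i)) \<le> 2 * (\<Sum>i\<in>UNIV. ln (z $ i))"
    unfolding sum.distrib[symmetric] sum_distrib_left
    by (rule sum_mono) (use y1(1) y2(1) ln_mid in \<open>auto simp: z_def pos_orthant_def\<close>)
  have lnz2: "\<kappa> * (\<Sum>i\<in>UNIV. ln (y1 $ i)) + \<kappa> * (\<Sum>i\<in>UNIV. ln (y2 $ i)) \<le> 2 * (\<kappa> * (\<Sum>i\<in>UNIV. ln (z $ i)))"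
    using mult_left_mono[OF lnz, of \<kappa>] k by (simp add: algebra_simps)
  have aux: "\<And>A B Z Q1 Q2 D::real. A + B \<le> 2 * Z \<Longrightarrow> 0 < D \<Longrightarrow> 1/2 * Q1 - A = 1/2 * Q2 - B
     \<Longrightarrow> 1 / 2 * ((Q1 + Q2) / 2 - D / 4) - Z < 1 / 2 * Q1 - A" by (simp add: field_simps)
  have "g z < g y1"
    unfolding g_def Qg_mid[of c d y1 y2, folded z_def]
    by (rule aux[OF lnz2 \<open>Qg c d (y1 - y2) > 0\<close>]) (use eq in \<open>simp add: g_def\<close>)
  thus False using y1(2) zpos by force
qed




lemma f_RP_Qg:
  assumes "(\<Sum>t\<in>UNIV. p $ t) = 1"
  shows "f_RP xi \<kappa> y p = (1/2) * Qg (\<lambda>t. p $ t) (\<lambda>t. xi t - mu_hat xi p) y - \<kappa> * (\<Sum>i\<in>UNIV. ln (y $ i))"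
  unfolding f_RP_def pTheta Qf_eq[OF assms]
  by (simp add: Qf_def Qg_def)

lemma ex1_min:
  assumes s: "(\<Sum>t\<in>UNIV. p $ t) = 1" and pd: "pos_definite (Sigma_hat xi p)" and k: "\<kappa> > 0"
  shows "\<exists>!y. y \<in> pos_orthant \<and> (\<forall>z\<in>pos_orthant. f_RP xi \<kappa> y p \<le> f_RP xi \<kappa> z p)"
proof -
  have pdQ: "\<forall>x. x \<noteq> 0 \<longrightarrow> 0 < Qg (\<lambda>t. p $ t) (\<lambda>t. xi t - mu_hat xi p) x"
    using pd unfolding pos_definite_def Sigma_quad by (simp add: Qf_def Qg_def)
  note fe = f_RP_Qg[OF s, of xi \<kappa>]
  show ?thesis
    unfolding fe
    using exists_min[OF pdQ k] unique_min[OF pdQ k] by blast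
qed

lemma yRP:
  assumes s: "(\<Sum>t\<in>UNIV. p $ t) = 1" and pd: "pos_definite (Sigma_hat xi p)" and k: "\<kappa> > 0"
  shows "y_RP xi \<kappa> p \<in> pos_orthant" "\<forall>z\<in>pos_orthant. f_RP xi \<kappa> (y_RP xi \<kappa> p) p \<le> f_RP xi \<kappa> z p"
    "\<And>y. y \<in> pos_orthant \<Longrightarrow> \<forall>z\<in>pos_orthant. f_RP xi \<kappa> y p \<le> f_RP xi \<kappa> z p \<Longrightarrow> y_RP xi \<kappa> p = y"
proof -
  note e = ex1_min[OF s pd k]
  have "y_RP xi \<kappa> p \<in> pos_orthant \<and> (\<forall>z\<in>pos_orthant. f_RP xi \<kappa> (y_RP xi \<kappa> p) p \<le> f_RP xi \<kappa> z p)"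
    unfolding y_RP_def by (rule theI'[OF e])
  then show "y_RP xi \<kappa> p \<in> pos_orthant" "\<forall>z\<in>pos_orthant. f_RP xi \<kappa> (y_RP xi \<kappa> p) p \<le> f_RP xi \<kappa> z p"
    by auto
  show "y_RP xi \<kappa> p = y" if "y \<in> pos_orthant" "\<forall>z\<in>pos_orthant. f_RP xi \<kappa> y p \<le> f_RP xi \<kappa> z p" for y
    unfolding y_RP_def using e that by (intro the1_equality) auto
qed

lemma final_arith:
  fixes k \<gamma> F S E L :: real
  assumes k: "0 < k" and g: "0 < \<gamma>" and B: "2 * \<gamma> * (k * F - S) \<le> E + k * (\<gamma>^2 * L^2)"
  shows "F - (1 / k) * S \<le> E / (2 * k * \<gamma>) + \<gamma> * L^2 / 2"
proof -
  have d: "2 * k * \<gamma> > 0" using k g by simp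
  have 1: "F - (1 / k) * S = (2 * \<gamma> * (k * F - S)) / (2 * k * \<gamma>)" using k g by (simp add: field_simps)
  have 2: "E / (2 * k * \<gamma>) + \<gamma> * L^2 / 2 = (E + k * (\<gamma>^2 * L^2)) / (2 * k * \<gamma>)"
    using k g by (simp add: field_simps power2_eq_square)
  show ?thesis unfolding 1 2 by (rule divide_right_mono[OF B]) (use d in simp)
qed

theorem theorem4:
  fixes xi :: "'t::finite \<Rightarrow> real^'n::finite"
    and \<kappa> \<gamma> L :: real
    and U :: "(real^'t) set"
    and ystar :: "real^'n" and pstar p0 :: "real^'t"
    and p :: "nat \<Rightarrow> real^'t"
  assumes kappa: "\<kappa> > 0"
    and U_ne: "U \<noteq> {}" and U_closed: "closed U" and U_convex: "convex U"
    and U_sub: "U \<subseteq> prob_simplex"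
    and Sigma_pd: "\<forall>q\<in>U. pos_definite (Sigma_hat xi q)"
    and saddle: "saddle_point xi \<kappa> U ystar pstar"
    and gamma: "\<gamma> > 0"
    and p0: "p0 \<in> U"
    and p_0: "p 0 = p0"
    and p_Suc: "\<forall>j. p (Suc j) = closest_point U (p j + \<gamma> *\<^sub>R grad_p_f_RP xi (y_RP xi \<kappa> (p j)) (p j))"
    and L: "L \<ge> 0"
    and L_bound: "\<forall>j. norm (grad_p_f_RP xi (y_RP xi \<kappa> (p j)) (p j)) \<le> L"
  shows "\<forall>k::nat. k \<ge> 1 \<longrightarrow>
     0 \<le> phi_RP xi \<kappa> pstar - (1 / real k) * (\<Sum>j<k. phi_RP xi \<kappa> (p j)) \<and>
     phi_RP xi \<kappa> pstar - (1 / real k) * (\<Sum>j<k. phi_RP xi \<kappa> (p j))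
       \<le> (norm (p0 - pstar))^2 / (2 * real k * \<gamma>) + \<gamma> * L^2 / 2"
proof -
  have sU: "(\<Sum>t\<in>UNIV. q $ t) = 1" if "q \<in> U" for q
    using that U_sub by (auto simp: prob_simplex_def)
  have pdU: "pos_definite (Sigma_hat xi q)" if "q \<in> U" for q using that Sigma_pd by blast
  note yR = yRP[OF sU pdU kappa]
  have pU: "p j \<in> U" for j
  proof (induction j)
    case 0 then show ?case using p0 p_0 by simp
  next
    case (Suc j) then show ?case using p_Suc closest_point_in_set[OF U_closed U_ne] by simp
  qed
  have ys: "ystar \<in> pos_orthant" and psU: "pstar \<in> U"
    and sp1: "\<forall>q\<in>U. f_RP xi \<kappa> ystar q \<le> f_RP xi \<kappa> ystar pstar"
    and sp2: "\<forall>y\<in>pos_orthant. f_RP xi \<kappa> ystar pstar \<le> f_RP xi \<kappa> y pstar"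
    using saddle unfolding saddle_point_def by auto
  have ystar_eq: "y_RP xi \<kappa> pstar = ystar" using yR(3)[OF psU psU ys sp2] .
  have phistar: "phi_RP xi \<kappa> pstar = f_RP xi \<kappa> ystar pstar"
    unfolding phi_RP_def ystar_eq ..
  define y where "y j = y_RP xi \<kappa> (p j)" for j
  define g where "g j = grad_p_f_RP xi (y j) (p j)" for j
  define e where "e j = (norm (p j - pstar))^2" for j
  have lower: "phi_RP xi \<kappa> (p j) \<le> phi_RP xi \<kappa> pstar" for j
  proof -
    have "phi_RP xi \<kappa> (p j) \<le> f_RP xi \<kappa> ystar (p j)"
      unfolding phi_RP_def using yR(2)[OF pU pU] ys by blast
    also have "\<dots> \<le> f_RP xi \<kappa> ystar pstar" using sp1 pU by blast
    finally show ?thesis unfolding phistar .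
  qed
  have step1: "phi_RP xi \<kappa> pstar - phi_RP xi \<kappa> (p j) \<le> g j \<bullet> (pstar - p j)" for j
  proof -
    have "phi_RP xi \<kappa> pstar \<le> f_RP xi \<kappa> (y j) pstar"
      unfolding phistar y_def using sp2 yR(1)[OF pU pU] by blast
    also have "\<dots> \<le> f_RP xi \<kappa> (y j) (p j) + g j \<bullet> (pstar - p j)"
      unfolding g_def by (rule f_concave)
    finally show ?thesis unfolding phi_RP_def y_def by simp
  qed
  have step2: "2 * \<gamma> * (g j \<bullet> (pstar - p j)) \<le> e j - e (Suc j) + \<gamma>^2 * L^2" for j
  proof -
    have "dist (p (Suc j)) pstar \<le> dist (p j + \<gamma> *\<^sub>R g j) pstar"
      using closest_point_lipschitz[OF U_convex U_closed U_ne, of "p j + \<gamma> *\<^sub>R g j" pstar]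
        closest_point_self[OF psU] p_Suc unfolding g_def y_def by simp
    hence "e (Suc j) \<le> (norm (p j + \<gamma> *\<^sub>R g j - pstar))^2"
      unfolding e_def dist_norm by (simp add: power_mono)
    also have "(norm (p j + \<gamma> *\<^sub>R g j - pstar))^2 = e j + 2 * \<gamma> * (g j \<bullet> (p j - pstar)) + \<gamma>^2 * (norm (g j))^2"
    proof -
      have "p j + \<gamma> *\<^sub>R g j - pstar = (p j - pstar) + \<gamma> *\<^sub>R g j" by simp
      then show ?thesis unfolding e_def
        by (simp only: power2_norm_eq_inner) (simp add: inner_add_left inner_add_right inner_commute power2_eq_square algebra_simps)
    qed
    finally have A: "e (Suc j) \<le> e j + 2 * \<gamma> * (g j \<bullet> (p j - pstar)) + \<gamma>^2 * (norm (g j))^2" .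
    have "(norm (g j))^2 \<le> L^2" using L_bound unfolding g_def y_def by (simp add: power_mono)
    hence "\<gamma>^2 * (norm (g j))^2 \<le> \<gamma>^2 * L^2" by (simp add: mult_left_mono)
    moreover have "g j \<bullet> (p j - pstar) = - (g j \<bullet> (pstar - p j))" by (simp add: inner_diff_right)
    ultimately show ?thesis using A by simp
  qed
  show ?thesis
  proof (intro allI impI conjI)
    fix k :: nat assume k: "k \<ge> 1"
    have kpos: "real k > 0" using k by simp
    have "(\<Sum>j<k. phi_RP xi \<kappa> (p j)) \<le> (\<Sum>j<k. phi_RP xi \<kappa> pstar)"
      by (rule sum_mono) (rule lower)
    hence "(\<Sum>j<k. phi_RP xi \<kappa> (p j)) \<le> real k * phi_RP xi \<kappa> pstar" by simp
    hence "(1 / real k) * (\<Sum>j<k. phi_RP xi \<kappa> (p j)) \<le> phi_RP xi \<kappa> pstar"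
      using kpos by (simp add: field_simps)
    then show "0 \<le> phi_RP xi \<kappa> pstar - (1 / real k) * (\<Sum>j<k. phi_RP xi \<kappa> (p j))" by simp
    have "(\<Sum>j<k. 2 * \<gamma> * (phi_RP xi \<kappa> pstar - phi_RP xi \<kappa> (p j))) \<le> (\<Sum>j<k. e j - e (Suc j) + \<gamma>^2 * L^2)"
    proof (rule sum_mono)
      fix j
      have "2 * \<gamma> * (phi_RP xi \<kappa> pstar - phi_RP xi \<kappa> (p j)) \<le> 2 * \<gamma> * (g j \<bullet> (pstar - p j))"
        using step1[of j] gamma by simp
      then show "2 * \<gamma> * (phi_RP xi \<kappa> pstar - phi_RP xi \<kappa> (p j)) \<le> e j - e (Suc j) + \<gamma>^2 * L^2"
        using step2[of j] by linarith
    qed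
    also have "\<dots> = e 0 - e k + real k * (\<gamma>^2 * L^2)"
      by (simp add: sum.distrib sum_lessThan_telescope')
    also have "\<dots> \<le> e 0 + real k * (\<gamma>^2 * L^2)" unfolding e_def by simp
    finally have B: "2 * \<gamma> * (real k * phi_RP xi \<kappa> pstar - (\<Sum>j<k. phi_RP xi \<kappa> (p j))) \<le> e 0 + real k * (\<gamma>^2 * L^2)"
      by (simp add: sum_distrib_left sum_subtractf algebra_simps)
    have e0: "e 0 = (norm (p0 - pstar))^2" unfolding e_def p_0 ..
    show "phi_RP xi \<kappa> pstar - (1 / real k) * (\<Sum>j<k. phi_RP xi \<kappa> (p j))
       \<le> (norm (p0 - pstar))^2 / (2 * real k * \<gamma>) + \<gamma> * L^2 / 2"
      using final_arith[OF kpos gamma B] unfolding e0 .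
  qed
qed


end
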